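(* Let $\mathcal D$ be a $(\gamma,V)$-stable distribution of $\mathbf X$. Let $E_*$ be an optimal equivalence class, let $G^*\in E_*$, and let $F\subseteq G^*$ be the set of families of the variables of $\bar V$ in $G^*$. Then: (1) $G^*\setminus F\in\mathcal G_V$; (2) $\mathcal S(G^*\setminus F)=\max_{G\in\mathcal G_V}\mathcal S(G)$; (3) the score of $F$ is maximal among the legal family sets for $\bar V$.
   Context: $\mathbf X=(X_1,\dots,X_d)$ is a random vector; $k$ a fixed positive integer. A family is $\langle X_i,\Pi\rangle$ with $\Pi\subseteq\mathbf X\setminus\{X_i\}$, $|\Pi|\le k$, and $H(\langle X_i,\Pi\rangle)=H(X_i\mid\Pi)$; $\mathcal F_{d,k}$ is the set of families. $\mathcal G_{d,k}$ = DAGs over $\mathbf X$ with in-degree $\le k$, identified with their family sets; for a family set $F$, $\mathcal S(F)=-\sum_{f\in F}H(f)$; $\mathcal S^*=\max_{G\in\mathcal G_{d,k}}\mathcal S(G)$. Markov equivalence classes (ECs) on $\mathcal G_{d,k}$ group DAGs with the same conditional independence constraints and share a score; an optimal EC has score $\mathcal S^*$. For $V\subseteq\mathbf X$, $\bar V:=\mathbf X\setminus V$, and $\mathcal G_V$ is the set of DAGs over $V$ with in-degree at most $k$. A legal family set for $\bar V$ is a set $F\subseteq\mathcal F_{d,k}$ containing exactly one family for each variable in $\bar V$ and no other families, and having no (directed) cycles. $(\gamma,V)$-stable: for $\gamma>0$ and $V\subseteq\mathbf X$, (1) in every $G\in\mathcal G_{d,k}$ with $\mathcal S(G)\ge\mathcal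 S^*-\gamma$ all parents of every variable in $V$ are in $V$; (2) for the marginal distribution on $V$ (over $\mathcal G_V$) there is a unique optimal EC and the score gap between the best and second-best EC is more than $\gamma$. *)

theory Defs
  imports "HOL-Probability.Probability_Mass_Function"
begin

text \<open>Variables X_0,...,X_{d-1} are identified with the indices 0..<d.
  A joint distribution of X is a pmf on assignments nat => 'v with 'v finite
  (coordinates >= d are irrelevant).  A family <X_i, Pi> is a pair (i, Pi).\<close>

type_synonym family = "nat \<times> nat set"

definition ent :: "(nat \<Rightarrow> 'v::finite) pmf \<Rightarrow> nat set \<Rightarrow> real" where
  "ent P S = (let Q = map_pmf (\<lambda>x i. if i \<in> S then x i else undefined) P in
      - (\<Sum>a\<in>set_pmf Q. pmf Q a * log 2 (pmf Q a)))"

definition Hfam :: "(nat \<Rightarrow> 'v::finite) pmf \<Rightarrow> family \<Rightarrow> real" where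
  "Hfam P f = ent P (insert (fst f) (snd f)) - ent P (snd f)"

definition score :: "(nat \<Rightarrow> 'v::finite) pmf \<Rightarrow> family set \<Rightarrow> real" where
  "score P F = - (\<Sum>f\<in>F. Hfam P f)"

definition is_family :: "nat \<Rightarrow> nat \<Rightarrow> family \<Rightarrow> bool" where
  "is_family d k f \<longleftrightarrow> fst f < d \<and> snd f \<subseteq> {..<d} - {fst f} \<and> card (snd f) \<le> k"

definition edges :: "family set \<Rightarrow> nat rel" where
  "edges F = {(j, i). \<exists>Pi. (i, Pi) \<in> F \<and> j \<in> Pi}"

definition legal_famset :: "nat \<Rightarrow> nat \<Rightarrow> nat set \<Rightarrow> family set \<Rightarrow> bool" where
  "legal_famset d k W F \<longleftrightarrow>
     (\<forall>f\<in>F. is_family d k f \<and> fst f \<in> W) \<and>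
     (\<forall>i\<in>W. \<exists>!Pi. (i, Pi) \<in> F) \<and> acyclic (edges F)"

definition dags_on :: "nat \<Rightarrow> nat \<Rightarrow> nat set \<Rightarrow> family set set" where
  "dags_on d k V = {G. legal_famset d k V G \<and> (\<forall>f\<in>G. snd f \<subseteq> V)}"

definition opt_score :: "(nat \<Rightarrow> 'v::finite) pmf \<Rightarrow> nat \<Rightarrow> nat \<Rightarrow> nat set \<Rightarrow> real" where
  "opt_score P d k V = Max (score P ` dags_on d k V)"

definition is_path :: "nat rel \<Rightarrow> nat list \<Rightarrow> bool" where
  "is_path E p \<longleftrightarrow> distinct p \<and>
     (\<forall>m. Suc m < length p \<longrightarrow> (p!m, p!Suc m) \<in> E \<or> (p!Suc m, p!m) \<in> E)"

definition collider :: "nat rel \<Rightarrow> nat list \<Rightarrow> nat \<Rightarrow> bool" where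
  "collider E p m \<longleftrightarrow> (p!(m-1), p!m) \<in> E \<and> (p!Suc m, p!m) \<in> E"

definition blocked :: "nat rel \<Rightarrow> nat set \<Rightarrow> nat list \<Rightarrow> bool" where
  "blocked E Z p \<longleftrightarrow> (\<exists>m. 0 < m \<and> Suc m < length p \<and>
     (if collider E p m then E\<^sup>* `` {p!m} \<inter> Z = {} else p!m \<in> Z))"

definition d_separated :: "nat rel \<Rightarrow> nat \<Rightarrow> nat \<Rightarrow> nat set \<Rightarrow> bool" where
  "d_separated E a b Z \<longleftrightarrow>
     (\<forall>p. is_path E p \<and> p \<noteq> [] \<and> hd p = a \<and> last p = b \<longrightarrow> blocked E Z p)"

text \<open>Markov equivalence of two DAGs over V: same conditional independence
  constraints, i.e. same d-separation statements among variables of V.\<close>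
definition markov_equiv :: "nat set \<Rightarrow> family set \<Rightarrow> family set \<Rightarrow> bool" where
  "markov_equiv V G1 G2 \<longleftrightarrow>
     (\<forall>a b Z. a \<in> V \<and> b \<in> V \<and> Z \<subseteq> V \<and> a \<noteq> b \<and> a \<notin> Z \<and> b \<notin> Z \<longrightarrow>
        (d_separated (edges G1) a b Z \<longleftrightarrow> d_separated (edges G2) a b Z))"

text \<open>(gamma,V)-stability.  (1) near-optimal DAGs (within gamma of S*) have all
  parents of V-variables inside V; (2) on V there is an optimal DAG G0 whose
  equivalence class is the unique optimal one, and every DAG outside that class
  scores more than gamma below the optimum (best minus second-best EC > gamma).\<close>
definition stable :: "(nat \<Rightarrow> 'v::finite) pmf \<Rightarrow> nat \<Rightarrow> nat \<Rightarrow> real \<Rightarrow> nat set \<Rightarrow> bool" where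
  "stable P d k \<gamma> V \<longleftrightarrow> \<gamma> > 0 \<and> V \<subseteq> {..<d} \<and>
     (\<forall>G\<in>dags_on d k {..<d}. score P G \<ge> opt_score P d k {..<d} - \<gamma> \<longrightarrow>
         (\<forall>f\<in>G. fst f \<in> V \<longrightarrow> snd f \<subseteq> V)) \<and>
     (\<exists>G0\<in>dags_on d k V. score P G0 = opt_score P d k V \<and>
         (\<forall>G\<in>dags_on d k V. \<not> markov_equiv V G G0 \<longrightarrow>
             opt_score P d k V - score P G > \<gamma>))"

end

theory Submission
  imports Defs
begin

lemma fam_finite:
  assumes "legal_famset d k W G" shows "finite G"
proof -
  have "G \<subseteq> {..<d} \<times> Pow {..<d}"
    using assms unfolding legal_famset_def is_family_def by force
  then show ?thesis by (rule finite_subset) auto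
qed

lemma edges_Un: "edges (A \<union> B) = edges A \<union> edges B"
  unfolding edges_def by blast

lemma edges_mono: "A \<subseteq> B \<Longrightarrow> edges A \<subseteq> edges B"
  unfolding edges_def by blast

lemma trancl_split:
  assumes A: "A \<subseteq> V \<times> V" and B: "B \<subseteq> UNIV \<times> (- V)"
  shows "(A \<union> B)\<^sup>+ \<subseteq> A\<^sup>+ \<union> (A\<^sup>* O B\<^sup>+)"
proof
  fix p assume "p \<in> (A \<union> B)\<^sup>+"
  then obtain x z where p: "p = (x, z)" and xz: "(x, z) \<in> (A \<union> B)\<^sup>+" by (cases p) auto
  from xz have "(x, z) \<in> A\<^sup>+ \<union> (A\<^sup>* O B\<^sup>+)"
  proof (induction rule: trancl_induct)
    case (base y)
    then show ?case by auto
  next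
    case (step y z)
    show ?case
    proof (cases "(y, z) \<in> A")
      case True
      then have "y \<in> V" using A by auto
      have "(x, y) \<notin> A\<^sup>* O B\<^sup>+"
      proof
        assume "(x, y) \<in> A\<^sup>* O B\<^sup>+"
        then obtain w where "(w, y) \<in> B\<^sup>+" by auto
        then have "y \<in> - V" using B by (induction rule: trancl_induct) auto
        with \<open>y \<in> V\<close> show False by auto
      qed
      with step.IH have "(x, y) \<in> A\<^sup>+" by auto
      with True show ?thesis by auto
    next
      case False
      with step have yz: "(y, z) \<in> B" by auto
      from step.IH show ?thesis
      proof
        assume "(x, y) \<in> A\<^sup>+"
        then have "(x, y) \<in> A\<^sup>*" by auto
        with yz show ?thesis by auto
      next
        assume "(x, y) \<in> A\<^sup>* O B\<^sup>+"
        then obtain w where "(x, w) \<in> A\<^sup>*" "(w, y) \<in> B\<^sup>+" by auto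
        with yz have "(w, z) \<in> B\<^sup>+" by auto
        with \<open>(x, w) \<in> A\<^sup>*\<close> show ?thesis by auto
      qed
    qed
  qed
  with p show "p \<in> A\<^sup>+ \<union> (A\<^sup>* O B\<^sup>+)" by simp
qed

lemma acyclic_split:
  assumes A: "A \<subseteq> V \<times> V" and B: "B \<subseteq> UNIV \<times> (- V)"
    and aA: "acyclic A" and aB: "acyclic B"
  shows "acyclic (A \<union> B)"
  unfolding acyclic_def
proof (intro allI notI)
  fix x assume "(x, x) \<in> (A \<union> B)\<^sup>+"
  with trancl_split[OF A B] have "(x, x) \<in> A\<^sup>+ \<union> (A\<^sup>* O B\<^sup>+)" by blast
  then show False
  proof
    assume "(x, x) \<in> A\<^sup>+" with aA show False by (auto simp: acyclic_def)
  next
    assume "(x, x) \<in> A\<^sup>* O B\<^sup>+"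
    then obtain w where xw: "(x, w) \<in> A\<^sup>*" and wx: "(w, x) \<in> B\<^sup>+" by auto
    from wx have "x \<in> - V" using B by (induction rule: trancl_induct) auto
    show False
    proof (cases "x = w")
      case True with wx aB show False by (auto simp: acyclic_def)
    next
      case False
      with xw have "(x, w) \<in> A\<^sup>+" by (auto simp: rtrancl_eq_or_trancl)
      then obtain u where "(x, u) \<in> A" by (induction rule: trancl_induct) auto
      with A have "x \<in> V" by auto
      with \<open>x \<in> - V\<close> show False by auto
    qed
  qed
qed

lemma combine:
  assumes H: "H \<in> dags_on d k V" and F': "legal_famset d k ({..<d} - V) F'"
    and Vd: "V \<subseteq> {..<d}"
  shows "H \<union> F' \<in> dags_on d k {..<d}"
proof -
  have lH: "legal_famset d k V H" and pH: "\<forall>f\<in>H. snd f \<subseteq> V"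
    using H unfolding dags_on_def by auto
  have eA: "edges H \<subseteq> V \<times> V" using lH pH
    unfolding edges_def legal_famset_def by force
  have eB: "edges F' \<subseteq> UNIV \<times> (- V)" using F'
    unfolding edges_def legal_famset_def by force
  have ac: "acyclic (edges (H \<union> F'))"
    unfolding edges_Un
    by (rule acyclic_split[OF eA eB]) (use lH F' in \<open>auto simp: legal_famset_def\<close>)
  have fam: "\<forall>f\<in>H \<union> F'. is_family d k f \<and> fst f \<in> {..<d}"
    using lH F' Vd unfolding legal_famset_def is_family_def by auto
  have uq: "\<forall>i\<in>{..<d}. \<exists>!Pi. (i, Pi) \<in> H \<union> F'"
  proof
    fix i assume i: "i \<in> {..<d}"
    show "\<exists>!Pi. (i, Pi) \<in> H \<union> F'"
    proof (cases "i \<in> V")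
      case True
      then have "\<exists>!Pi. (i, Pi) \<in> H" using lH unfolding legal_famset_def by auto
      moreover have "\<forall>Pi. (i, Pi) \<notin> F'" using F' True unfolding legal_famset_def by force
      ultimately show ?thesis by auto
    next
      case False
      then have "\<exists>!Pi. (i, Pi) \<in> F'" using F' i unfolding legal_famset_def by auto
      moreover have "\<forall>Pi. (i, Pi) \<notin> H" using lH False unfolding legal_famset_def by force
      ultimately show ?thesis by auto
    qed
  qed
  have sub: "\<forall>f\<in>H \<union> F'. snd f \<subseteq> {..<d}"
    using fam unfolding is_family_def by auto
  show ?thesis unfolding dags_on_def legal_famset_def
    using ac fam uq sub by auto
qed

lemma score_Un:
  assumes "finite A" "finite B" "A \<inter> B = {}"
  shows "score P (A \<union> B) = score P A + score P B"
  unfolding score_def using sum.union_disjoint[OF assms, of "Hfam P"] by simp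

lemma finite_dags: "finite (dags_on d k W)"
proof -
  have "dags_on d k W \<subseteq> Pow ({..<d} \<times> Pow {..<d})"
    unfolding dags_on_def legal_famset_def is_family_def by force
  then show ?thesis by (rule finite_subset) auto
qed

lemma le_opt:
  assumes "G \<in> dags_on d k W" shows "score P G \<le> opt_score P d k W"
  unfolding opt_score_def using assms finite_dags by simp

theorem lemma4:
  fixes P :: "(nat \<Rightarrow> 'v::finite) pmf" and d k :: nat and \<gamma> :: real
    and V :: "nat set" and Gs :: "family set"
  assumes "stable P d k \<gamma> V"
    and "Gs \<in> dags_on d k {..<d}"
    and "score P Gs = opt_score P d k {..<d}"
  defines "F \<equiv> {f \<in> Gs. fst f \<in> {..<d} - V}"
  shows "Gs - F \<in> dags_on d k V \<and>
         score P (Gs - F) = opt_score P d k V \<and>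
         legal_famset d k ({..<d} - V) F \<and>
         (\<forall>F'. legal_famset d k ({..<d} - V) F' \<longrightarrow> score P F' \<le> score P F)"
proof -
  have gp: "\<gamma> > 0" and Vd: "V \<subseteq> {..<d}"
    and st1: "\<forall>f\<in>Gs. fst f \<in> V \<longrightarrow> snd f \<subseteq> V"
    using assms(1,2,3) unfolding stable_def by auto
  have lG: "legal_famset d k {..<d} Gs" using assms(2) unfolding dags_on_def by auto
  have finG: "finite Gs" using fam_finite[OF lG] .
  have GF: "Gs - F = {f \<in> Gs. fst f \<in> V}"
    using lG unfolding F_def legal_famset_def is_family_def by auto
  have acG: "acyclic (edges Gs)" using lG unfolding legal_famset_def by auto
  have H: "Gs - F \<in> dags_on d k V"
  proof -
    have "acyclic (edges (Gs - F))"
      using acyclic_subset[OF acG edges_mono[of "Gs - F" Gs]] by auto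
    moreover have "\<forall>i\<in>V. \<exists>!Pi. (i, Pi) \<in> Gs - F"
      using lG Vd unfolding GF legal_famset_def by (auto; metis fst_conv lessThan_iff subsetD)
    ultimately show ?thesis unfolding dags_on_def legal_famset_def GF
      using lG st1 by (auto simp: legal_famset_def)
  qed
  have LF: "legal_famset d k ({..<d} - V) F"
  proof -
    have "acyclic (edges F)"
      using acyclic_subset[OF acG edges_mono[of F Gs]] F_def by auto
    moreover have "\<forall>i\<in>{..<d} - V. \<exists>!Pi. (i, Pi) \<in> F"
      using lG unfolding F_def legal_famset_def by auto
    ultimately show ?thesis using lG unfolding legal_famset_def F_def by auto
  qed
  have split: "score P Gs = score P (Gs - F) + score P F"
  proof -
    have "Gs = (Gs - F) \<union> F" unfolding F_def by auto
    then have "score P Gs = score P ((Gs - F) \<union> F)" by simp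
    also have "\<dots> = score P (Gs - F) + score P F"
      by (rule score_Un) (use finG F_def in auto)
    finally show ?thesis .
  qed
  have dis: "\<And>H F'. H \<in> dags_on d k V \<Longrightarrow> legal_famset d k ({..<d} - V) F' \<Longrightarrow>
      score P (H \<union> F') = score P H + score P F'"
  proof -
    fix H F' assume H: "H \<in> dags_on d k V" and F': "legal_famset d k ({..<d} - V) F'"
    have "H \<inter> F' = {}" using H F' unfolding dags_on_def legal_famset_def by force
    moreover have "finite H" using H fam_finite unfolding dags_on_def by blast
    ultimately show "score P (H \<union> F') = score P H + score P F'"
      using score_Un fam_finite[OF F'] by blast
  qed
  have opt2: "score P (Gs - F) = opt_score P d k V"
  proof -
    have "\<forall>G\<in>dags_on d k V. score P G \<le> score P (Gs - F)"
    proof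
      fix G assume G: "G \<in> dags_on d k V"
      have "score P (G \<union> F) \<le> opt_score P d k {..<d}"
        by (rule le_opt) (rule combine[OF G LF Vd])
      then show "score P G \<le> score P (Gs - F)"
        using dis[OF G LF] split assms(3) by simp
    qed
    then have "Max (score P ` dags_on d k V) = score P (Gs - F)"
      using H finite_dags by (intro Max_eqI) auto
    then show ?thesis unfolding opt_score_def by simp
  qed
  have opt3: "\<forall>F'. legal_famset d k ({..<d} - V) F' \<longrightarrow> score P F' \<le> score P F"
  proof (intro allI impI)
    fix F' assume F': "legal_famset d k ({..<d} - V) F'"
    have "score P ((Gs - F) \<union> F') \<le> opt_score P d k {..<d}"
      by (rule le_opt) (rule combine[OF H F' Vd])
    then show "score P F' \<le> score P F"
      using dis[OF H F'] split assms(3) by simp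
  qed
  show ?thesis using H opt2 LF opt3 by blast
qed

end
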